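(* Let $\delta_0>0$. For each fixed positive integer $t$ there is a constant $C_t$ (depending only on $t$, not on $\delta$ or $k$) such that the following holds for all integers $k\ge t+1$ and all $\delta\in[\delta_0,1)$ with $\delta k+k-1$ an odd integer. Let $P(x)=\operatorname{sign}(\delta k x_1+x_2+\cdots+x_k)$, $u=\frac{1+\delta}{2}k$, $v=\frac{1-\delta}{2}k$ (these are positive integers). Then \[\hat P_{\{1\}}=1-\frac{1}{2^{k-2}}\sum_{l=0}^{v-1}\binom{k-1}{l};\] if $t$ is odd and $I\subseteq\{2,\dots,k\}$ with $|I|=t$, then \[\hat P_I=\frac{1}{2^{k-2}}\cdot\frac{(k-t-1)!}{(u-1)!(v-1)!}\Big(\delta^{t-1}k^{t-1}-\frac{(t-1)(t-2)}{2}\delta^{t-3}k^{t-2}+R\Big);\] and if $t$ is even and $I=\{1\}\cup J$ with $J\subseteq\{2,\dots,k\}$, $|J|=t$, then \[\hat P_I=-\frac{1}{2^{k-2}}\cdot\frac{(k-t-1)!}{(u-1)!(v-1)!}\Big(\delta^{t-1}k^{t-1}-\frac{(t-1)(t-2)}{2}\delta^{t-3}k^{t-2}+R\Big);\] where in both cases $|R|\le C_t k^{t-3}$.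
   Context: For $P:\{-1,1\}^k\to\{-1,1\}$ and $I\subseteq[k]$, $\hat P_I=\mathbb{E}_{x\in\{-1,1\}^k}[P(x)\prod_{i\in I}x_i]$ with $x$ uniform. *)

theory Defs
  imports Complex_Main "HOL-Library.FuncSet"
begin

definition cube :: "nat \<Rightarrow> (nat \<Rightarrow> real) set" where
  "cube k = PiE {1..k} (\<lambda>_. {-1, 1})"

definition fourier_coeff :: "nat \<Rightarrow> ((nat \<Rightarrow> real) \<Rightarrow> real) \<Rightarrow> nat set \<Rightarrow> real" where
  "fourier_coeff k P I = (\<Sum>x\<in>cube k. P x * (\<Prod>i\<in>I. x i)) / 2 ^ k"

definition wmaj :: "nat \<Rightarrow> real \<Rightarrow> (nat \<Rightarrow> real) \<Rightarrow> real" where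
  "wmaj k \<delta> x = sgn (\<delta> * real k * x 1 + (\<Sum>i\<in>{2..k}. x i))"

end

theory Submission
  imports Defs
begin


definition xv :: "nat set \<Rightarrow> nat set \<Rightarrow> nat \<Rightarrow> real" where
  "xv A T i = (if i \<in> A then (if i \<in> T then 1 else -1) else undefined)"

lemma cube_pow:
  "(\<Sum>x\<in>cube k. F x) = (\<Sum>T\<in>Pow {1..k}. F (xv {1..k} T))"
proof -
  have eq: "xv {1..k} {i \<in> {1..k}. x i = 1} = x" if x: "x \<in> PiE {1..k} (\<lambda>_. {-1::real,1})" for x
  proof
    fix i show "xv {1..k} {i \<in> {1..k}. x i = 1} i = x i"
      using x by (force simp: xv_def PiE_def extensional_def Pi_iff)
  qed
  show ?thesis unfolding cube_def
  proof (rule sum.reindex_bij_witness[where j = "\<lambda>x. {i\<in>{1..k}. x i = 1}" and i = "xv {1..k}"])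
    fix a assume a: "a \<in> PiE {1..k} (\<lambda>_. {-1::real,1})"
    show "xv {1..k} {i \<in> {1..k}. a i = 1} = a" using eq[OF a] .
    show "{i \<in> {1..k}. a i = 1} \<in> Pow {1..k}" by auto
    show "F (xv {1..k} {i \<in> {1..k}. a i = 1}) = F a" using eq[OF a] by simp
  next
    fix b assume b: "b \<in> Pow {1..k}"
    show "{i \<in> {1..k}. xv {1..k} b i = 1} = b" using b by (auto simp: xv_def)
    show "xv {1..k} b \<in> PiE {1..k} (\<lambda>_. {-1::real,1})" by (auto simp: xv_def PiE_def extensional_def)
  qed
qed

lemma pow_split:
  assumes "A \<inter> B = {}"
  shows "(\<Sum>T\<in>Pow (A \<union> B). F T) = (\<Sum>T1\<in>Pow A. \<Sum>T2\<in>Pow B. F (T1 \<union> T2))"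
proof -
  have "(\<Sum>T1\<in>Pow A. \<Sum>T2\<in>Pow B. F (T1 \<union> T2)) = (\<Sum>(T1,T2)\<in>Pow A \<times> Pow B. F (T1 \<union> T2))"
    by (rule sum.cartesian_product)
  also have "\<dots> = (\<Sum>T\<in>Pow (A \<union> B). F T)"
    by (rule sum.reindex_bij_witness[where i = "\<lambda>T. (T \<inter> A, T \<inter> B)" and j = "\<lambda>(T1,T2). T1 \<union> T2"])
       (use assms in auto)
  finally show ?thesis by simp
qed

lemma pow_card:
  assumes "finite A"
  shows "(\<Sum>T\<in>Pow A. g (card T)) = (\<Sum>m=0..card A. real (card A choose m) * g m)"
proof -
  have "(\<Sum>T\<in>Pow A. g (card T)) = (\<Sum>m\<in>{0..card A}. \<Sum>T\<in>{T. T \<in> Pow A \<and> card T = m}. g (card T))"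
    by (rule sum.group[symmetric]) (use assms in \<open>auto intro: card_mono\<close>)
  also have "\<dots> = (\<Sum>m=0..card A. real (card A choose m) * g m)"
  proof (rule sum.cong[OF refl])
    fix m
    have "(\<Sum>T\<in>{T. T \<in> Pow A \<and> card T = m}. g (card T)) = (\<Sum>T\<in>{T. T \<subseteq> A \<and> card T = m}. g m)"
      by (rule sum.cong) auto
    also have "\<dots> = real (card A choose m) * g m" using n_subsets[OF assms, of m] by simp
    finally show "(\<Sum>T\<in>{T. T \<in> Pow A \<and> card T = m}. g (card T)) = real (card A choose m) * g m" .
  qed
  finally show ?thesis .
qed

lemma pow_card2:
  assumes "finite A" "finite B"
  shows "(\<Sum>T2\<in>Pow A. \<Sum>T3\<in>Pow B. f (card T2) (card T3)) =
    (\<Sum>p=0..card A. real (card A choose p) * (\<Sum>q=0..card B. real (card B choose q) * f p q))"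
proof -
  have "(\<Sum>T2\<in>Pow A. \<Sum>T3\<in>Pow B. f (card T2) (card T3)) =
     (\<Sum>T2\<in>Pow A. \<Sum>q=0..card B. real (card B choose q) * f (card T2) q)"
    by (rule sum.cong[OF refl]) (rule pow_card[OF assms(2), of "\<lambda>m. f _ m"])
  also have "\<dots> = (\<Sum>p=0..card A. real (card A choose p) * (\<Sum>q=0..card B. real (card B choose q) * f p q))"
    by (rule pow_card[OF assms(1), of "\<lambda>m. \<Sum>q=0..card B. real (card B choose q) * f m q"])
  finally show ?thesis .
qed

lemma sum_pm:
  assumes "finite S"
  shows "(\<Sum>i\<in>S. if i \<in> T then 1 else -1::real) = 2 * real (card (S \<inter> T)) - real (card S)"
proof -
  have "(\<Sum>i\<in>S. if i \<in> T then 1 else -1::real) = real (card (S \<inter> T)) - real (card (S - T))"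
    using assms by (simp add: sum.If_cases Int_def Diff_eq)
  moreover have "card S = card (S \<inter> T) + card (S - T)"
    using assms by (metis card_Int_Diff)
  ultimately show ?thesis by simp
qed

lemma prod_pm:
  assumes "finite S"
  shows "(\<Prod>i\<in>S. if i \<in> T then 1 else -1::real) = (-1) ^ (card S - card (S \<inter> T))"
proof -
  have "(\<Prod>i\<in>S. if i \<in> T then 1 else -1::real) = (-1) ^ card (S - T)"
    using assms by (simp add: prod.If_cases Int_def Diff_eq)
  moreover have "card S = card (S \<inter> T) + card (S - T)"
    using assms by (metis card_Int_Diff)
  ultimately show ?thesis by simp
qed

lemma decomp:
  fixes k :: nat and I :: "nat set" and H :: "real \<Rightarrow> real \<Rightarrow> real \<Rightarrow> real"
  assumes I: "I \<subseteq> {2..k}" and k: "k \<ge> 1"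
  shows "(\<Sum>x\<in>cube k. H (x 1) (\<Sum>i\<in>I. x i) (\<Sum>i\<in>{2..k} - I. x i) * (\<Prod>i\<in>I. x i)) =
    (\<Sum>p=0..card I. \<Sum>q=0..card ({2..k} - I). real (card I choose p) * real (card ({2..k} - I) choose q) * (-1)^(card I - p) *
       (H 1 (2*real p - card I) (2*real q - card ({2..k} - I)) + H (-1) (2*real p - card I) (2*real q - card ({2..k} - I))))"
proof -
  define R where "R = {2..k} - I"
  have fI: "finite I" using I finite_subset by blast
  have fR: "finite R" unfolding R_def by simp
  have IR: "I \<inter> R = {}" unfolding R_def by auto
  have spl: "{1..k} = {1} \<union> (I \<union> R)" using I k unfolding R_def by auto
  define \<Phi> where "\<Phi> = (\<lambda>e (p::nat) (q::nat). H e (2*real p - card I) (2*real q - card R) * (-1)^(card I - p))"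
  define G where "G = (\<lambda>x. H (x 1) (\<Sum>i\<in>I. x i) (\<Sum>i\<in>R. x i) * (\<Prod>i\<in>I. x i))"
  have key: "G (xv {1..k} (T1 \<union> (T2 \<union> T3))) = \<Phi> (if 1 \<in> T1 then 1 else -1) (card T2) (card T3)"
    if "T1 \<subseteq> {1}" "T2 \<subseteq> I" "T3 \<subseteq> R" for T1 T2 T3
  proof -
    let ?T = "T1 \<union> (T2 \<union> T3)"
    have 1: "xv {1..k} ?T 1 = (if 1 \<in> T1 then 1 else -1)"
      using that k I unfolding xv_def R_def by auto
    have s1: "(\<Sum>i\<in>I. xv {1..k} ?T i) = (\<Sum>i\<in>I. if i \<in> ?T then 1 else -1)"
      by (rule sum.cong) (use I spl in \<open>auto simp: xv_def\<close>)
    have s2: "(\<Sum>i\<in>R. xv {1..k} ?T i) = (\<Sum>i\<in>R. if i \<in> ?T then 1 else -1)"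
      by (rule sum.cong) (use spl in \<open>auto simp: xv_def\<close>)
    have s3: "(\<Prod>i\<in>I. xv {1..k} ?T i) = (\<Prod>i\<in>I. if i \<in> ?T then 1 else -1)"
      by (rule prod.cong) (use I spl in \<open>auto simp: xv_def\<close>)
    have i1: "I \<inter> ?T = T2" using that IR I by auto
    have i2: "R \<inter> ?T = T3" using that IR I unfolding R_def by auto
    show ?thesis unfolding G_def \<Phi>_def 1 s1 s2 s3 sum_pm[OF fI] sum_pm[OF fR] prod_pm[OF fI] i1 i2 ..
  qed
  have "(\<Sum>x\<in>cube k. G x) = (\<Sum>T\<in>Pow ({1} \<union> (I \<union> R)). G (xv {1..k} T))"
    unfolding cube_pow spl[symmetric] ..
  also have "\<dots> = (\<Sum>T1\<in>Pow {1::nat}. \<Sum>T2\<in>Pow I. \<Sum>T3\<in>Pow R. G (xv {1..k} (T1 \<union> (T2 \<union> T3))))"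
  proof -
    have d1: "{1} \<inter> (I \<union> R) = {}" using I unfolding R_def by auto
    show ?thesis by (subst pow_split[OF d1]) (simp add: pow_split[OF IR])
  qed
  also have "\<dots> = (\<Sum>T1\<in>Pow {1::nat}. \<Sum>T2\<in>Pow I. \<Sum>T3\<in>Pow R. \<Phi> (if 1 \<in> T1 then 1 else -1) (card T2) (card T3))"
    by (rule sum.cong[OF refl], rule sum.cong[OF refl], rule sum.cong[OF refl], rule key) auto
  also have "\<dots> = (\<Sum>T1\<in>Pow {1::nat}. \<Sum>p=0..card I. real (card I choose p) * (\<Sum>q=0..card R. real (card R choose q) * \<Phi> (if 1 \<in> T1 then 1 else -1) p q))"
    by (rule sum.cong[OF refl]) (rule pow_card2[OF fI fR])
  also have "\<dots> = (\<Sum>p=0..card I. real (card I choose p) * (\<Sum>q=0..card R. real (card R choose q) * \<Phi> 1 p q))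
     + (\<Sum>p=0..card I. real (card I choose p) * (\<Sum>q=0..card R. real (card R choose q) * \<Phi> (-1) p q))"
  proof -
    have "Pow {1::nat} = {{}, {1}}" by blast
    then show ?thesis by simp
  qed
  also have "\<dots> = (\<Sum>p=0..card I. \<Sum>q=0..card R. real (card I choose p) * real (card R choose q) * (-1)^(card I - p) *
       (H 1 (2*real p - card I) (2*real q - card R) + H (-1) (2*real p - card I) (2*real q - card R)))"
    by (simp add: \<Phi>_def sum.distrib[symmetric] sum_distrib_left algebra_simps)
  finally show ?thesis unfolding G_def R_def .
qed



lemma pascal_aux:
  fixes f :: "nat \<Rightarrow> real"
  shows "(\<Sum>p=0..n. real (n choose Suc p) * (-1)^p * f (Suc p)) = f 0 - (\<Sum>p=0..n. real (n choose p) * (-1)^p * f p)"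
proof -
  have "(\<Sum>p=0..Suc n. real (n choose p) * (-1)^p * f p) = f 0 + (\<Sum>p=0..n. real (n choose Suc p) * (-1)^(Suc p) * f (Suc p))"
    by (subst sum.atLeast0_atMost_Suc_shift) simp
  moreover have "(\<Sum>p=0..Suc n. real (n choose p) * (-1)^p * f p) = (\<Sum>p=0..n. real (n choose p) * (-1)^p * f p)"
    by (simp add: sum.atLeast0_atMost_Suc)
  ultimately show ?thesis by (simp add: sum_negf)
qed

lemma pascal_diff:
  fixes f :: "nat \<Rightarrow> real"
  shows "(\<Sum>p=0..Suc n. real (Suc n choose p) * (-1)^p * f p) = - (\<Sum>p=0..n. real (n choose p) * (-1)^p * (f (Suc p) - f p))"
proof -
  have "(\<Sum>p=0..Suc n. real (Suc n choose p) * (-1)^p * f p) = f 0 + (\<Sum>p=0..n. real (Suc n choose Suc p) * (-1)^(Suc p) * f (Suc p))"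
    by (subst sum.atLeast0_atMost_Suc_shift) simp
  also have "\<dots> = f 0 - (\<Sum>p=0..n. real (n choose p) * (-1)^p * f (Suc p)) - (\<Sum>p=0..n. real (n choose Suc p) * (-1)^p * f (Suc p))"
    by (simp add: algebra_simps sum.distrib sum_negf sum_subtractf)
  also have "\<dots> = - (\<Sum>p=0..n. real (n choose p) * (-1)^p * (f (Suc p) - f p))"
  proof -
    have e1: "(\<Sum>p=0..n. real (n choose p) * (-1)^p * (f (Suc p) - f p)) = (\<Sum>p=0..n. real (n choose p) * (-1)^p * f (Suc p)) - (\<Sum>p=0..n. real (n choose p) * (-1)^p * f p)"
      by (simp add: sum_subtractf right_diff_distrib)
    show ?thesis using e1 pascal_aux[of n f] by linarith
  qed
  finally show ?thesis .
qed

lemma sgn_step: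
  fixes x :: int assumes "odd x"
  shows "sgn (real_of_int x + 2) - sgn (real_of_int x) = (if x = -1 then 2 else 0)"
proof -
  have "x \<le> -3 \<or> x = -1 \<or> x \<ge> 1" using assms by presburger
  then show ?thesis by (auto simp: sgn_real_def)
qed

lemma finite_diff_sgn:
  fixes w :: int
  assumes "odd (w + int (Suc n))"
  shows "(\<Sum>p=0..Suc n. real (Suc n choose p) * (-1)^p * sgn (real_of_int w + (2 * real p - real (Suc n))))
    = - (\<Sum>p=0..n. real (n choose p) * (-1)^p * (if w + 2 * int p - int (Suc n) = -1 then 2 else 0))"
proof -
  define f where "f = (\<lambda>p::nat. sgn (real_of_int w + (2 * real p - real (Suc n))))"
  have "f (Suc p) - f p = (if w + 2 * int p - int (Suc n) = -1 then 2 else 0)" for p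
  proof -
    have o: "odd (w + 2 * int p - int (Suc n))" using assms by presburger
    have "f p = sgn (real_of_int (w + 2 * int p - int (Suc n)))" unfolding f_def by (simp add: algebra_simps)
    moreover have "f (Suc p) = sgn (real_of_int (w + 2 * int p - int (Suc n)) + 2)" unfolding f_def by (simp add: algebra_simps)
    ultimately show ?thesis using sgn_step[OF o] by simp
  qed
  then show ?thesis using pascal_diff[of n f] unfolding f_def by simp
qed

lemma count_q:
  "(\<Sum>q=0..N. real (N choose q) * (if q + p + 1 = v then 1 else 0)) = (if p < v then real (N choose (v - 1 - p)) else 0)"
proof (cases "p < v")
  case True
  have "(\<Sum>q=0..N. real (N choose q) * (if q + p + 1 = v then 1 else 0)) = (\<Sum>q\<in>{0..N}. if q = v - 1 - p then real (N choose q) else 0)"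
    by (rule sum.cong) (use True in auto)
  also have "\<dots> = real (N choose (v - 1 - p))"
    by (subst sum.delta) (auto simp: binomial_eq_0)
  finally show ?thesis using True by simp
qed auto

lemma double_sum:
  fixes c :: int
  assumes "odd (c + int (Suc n) + int N)"
  shows "(\<Sum>p=0..Suc n. \<Sum>q=0..N. real (Suc n choose p) * real (N choose q) * (-1)^(Suc n - p) *
           sgn (real_of_int c + (2 * real p - real (Suc n)) + (2 * real q - real N)))
       = 2 * (-1)^n * (\<Sum>p=0..n. real (n choose p) * (-1)^p *
           (\<Sum>q=0..N. real (N choose q) * (if c + 2 * int p - int (Suc n) + 2 * int q - int N = -1 then 1 else 0)))"
proof -
  have sg: "(-1::real)^(Suc n - p) = (-1)^(Suc n) * (-1)^p" if "p \<le> Suc n" for p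
  proof -
    define m where "m = Suc n - p"
    have sn: "Suc n = p + m" using that unfolding m_def by simp
    have pp: "(-1::real)^p * (-1)^p = 1" by (simp flip: power_add)
    have "(-1::real)^(Suc n) * (-1)^p = (-1)^m * ((-1)^p * (-1)^p)" unfolding sn power_add by (simp add: algebra_simps)
    then show ?thesis unfolding m_def[symmetric] pp by simp
  qed
  have "(\<Sum>p=0..Suc n. \<Sum>q=0..N. real (Suc n choose p) * real (N choose q) * (-1)^(Suc n - p) *
           sgn (real_of_int c + (2 * real p - real (Suc n)) + (2 * real q - real N)))
     = (-1)^(Suc n) * (\<Sum>q=0..N. real (N choose q) * (\<Sum>p=0..Suc n. real (Suc n choose p) * (-1)^p *
           sgn (real_of_int (c + 2 * int q - int N) + (2 * real p - real (Suc n)))))"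
    apply (subst sum.swap)
    apply (simp only: sum_distrib_left)
    apply (rule sum.cong[OF refl])+
    apply (simp add: sg algebra_simps)
    done
  also have "\<dots> = (-1)^(Suc n) * (\<Sum>q=0..N. real (N choose q) * (- (\<Sum>p=0..n. real (n choose p) * (-1)^p *
           (if (c + 2 * int q - int N) + 2 * int p - int (Suc n) = -1 then 2 else 0))))"
  proof -
    have "odd ((c + 2 * int q - int N) + int (Suc n))" for q using assms by presburger
    note fd = finite_diff_sgn[OF this]
    show ?thesis by (simp only: fd)
  qed
  also have "\<dots> = 2 * (-1)^n * (\<Sum>p=0..n. real (n choose p) * (-1)^p *
           (\<Sum>q=0..N. real (N choose q) * (if c + 2 * int p - int (Suc n) + 2 * int q - int N = -1 then 1 else 0)))"
    apply (simp only: sum_negf[symmetric] sum_distrib_left)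
    apply (subst sum.swap)
    apply (rule sum.cong[OF refl])+
    apply (auto simp: algebra_simps)
    done
  finally show ?thesis .
qed



fun ff :: "nat \<Rightarrow> real \<Rightarrow> real" where
  "ff 0 x = 1"
| "ff (Suc j) x = ff j x * (x - real j)"

lemma ff_nat: "ff j (real m) = (if j \<le> m then fact m / fact (m - j) else 0)"
proof (induction j)
  case 0 then show ?case by simp
next
  case (Suc j)
  show ?case
  proof (cases "Suc j \<le> m")
    case True
    then have e: "m - j = Suc (m - Suc j)" by simp
    have f: "fact (m - j) = real (m - j) * fact (m - Suc j)" unfolding e by simp
    have nz: "real (m - j) \<noteq> 0" using True by simp
    have "ff (Suc j) (real m) = fact m / fact (m - j) * real (m - j)" using Suc True by (simp add: of_nat_diff)
    also have "\<dots> = fact m / fact (m - Suc j)" unfolding f using nz by (simp add: field_simps)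
    finally show ?thesis using True by simp
  next
    case False
    then show ?thesis using Suc by auto
  qed
qed

lemma pow_le_K: "\<bar>x::real\<bar> \<le> K \<Longrightarrow> \<bar>x ^ m\<bar> \<le> K ^ m"
  by (simp add: power_abs power_mono)

lemma ff_exp: "\<exists>e. \<forall>x K. 1 \<le> K \<and> \<bar>x\<bar> \<le> K \<longrightarrow>
   \<bar>ff j x - (x ^ j - real (j choose 2) * x ^ (j - 1))\<bar> * K^2 \<le> e * K ^ j"
proof (induction j)
  case 0 then show ?case by (intro exI[of _ 0]) (simp add: binomial_eq_0)
next
  case (Suc j)
  then obtain e where e: "\<And>x K. 1 \<le> K \<Longrightarrow> \<bar>x\<bar> \<le> K \<Longrightarrow>
     \<bar>ff j x - (x ^ j - real (j choose 2) * x ^ (j - 1))\<bar> * K^2 \<le> e * K ^ j" by blast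
  have e0: "e \<ge> 0" using e[of 1 0] by simp
  define C where "C = real (j choose 2)"
  have C0: "C \<ge> 0" unfolding C_def by simp
  have cs: "real (Suc j choose 2) = C + real j"
    unfolding C_def by (simp add: numeral_2_eq_2)
  show ?case
  proof (intro exI[of _ "e * (1 + real j) + real j * C"] allI impI)
    fix x K :: real assume xk: "1 \<le> K \<and> \<bar>x\<bar> \<le> K"
    define E where "E = ff j x - (x ^ j - C * x ^ (j - 1))"
    have eq: "ff (Suc j) x - (x ^ Suc j - real (Suc j choose 2) * x ^ (Suc j - 1))
       = E * (x - real j) + real j * C * x ^ (j - 1)"
    proof (cases j)
      case 0 then show ?thesis unfolding E_def C_def by (simp add: binomial_eq_0)
    next
      case (Suc i)
      then show ?thesis unfolding E_def cs by (simp add: algebra_simps)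
    qed
    have K0: "K \<ge> 1" using xk by simp
    have b1: "\<bar>E * (x - real j)\<bar> * K^2 \<le> e * (1 + real j) * K ^ Suc j"
    proof -
      have h1: "\<bar>E\<bar> * K^2 \<le> e * K^j" using e[of K x] xk unfolding E_def C_def by simp
      have h2: "\<bar>x - real j\<bar> \<le> K * (1 + real j)"
      proof -
        have "\<bar>x - real j\<bar> \<le> K + real j" using xk by linarith
        also have "\<dots> \<le> K * (1 + real j)"
        proof -
          have "real j * 1 \<le> real j * K" using K0 by (intro mult_left_mono) auto
          then show ?thesis by (simp add: algebra_simps)
        qed
        finally show ?thesis .
      qed
      have "\<bar>E * (x - real j)\<bar> * K^2 = (\<bar>E\<bar> * K^2) * \<bar>x - real j\<bar>" by (simp add: abs_mult)
      also have "\<dots> \<le> (e * K^j) * (K * (1 + real j))"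
        by (rule mult_mono[OF h1 h2]) (use e0 K0 in auto)
      also have "\<dots> = e * (1 + real j) * K ^ Suc j" by (simp add: algebra_simps)
      finally show ?thesis .
    qed
    have b2: "\<bar>real j * C * x ^ (j - 1)\<bar> * K^2 \<le> real j * C * K ^ Suc j"
    proof (cases j)
      case 0 then show ?thesis by simp
    next
      case (Suc i)
      have "\<bar>x ^ i\<bar> \<le> K ^ i" using xk by (simp add: pow_le_K)
      then have "\<bar>x ^ i\<bar> * K^2 \<le> K ^ i * K^2" using K0 by (simp add: mult_right_mono)
      then have "real j * C * (\<bar>x ^ i\<bar> * K^2) \<le> real j * C * (K ^ i * K^2)"
        using C0 by (simp add: mult_left_mono)
      moreover have "\<bar>real j * C * x ^ (j - 1)\<bar> * K^2 = real j * C * (\<bar>x ^ i\<bar> * K^2)"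
        using Suc C0 by (simp add: abs_mult)
      moreover have "K ^ i * K^2 = K ^ Suc j" using Suc by (simp add: power_add[symmetric])
      ultimately show ?thesis by metis
    qed
    have "\<bar>ff (Suc j) x - (x ^ Suc j - real (Suc j choose 2) * x ^ (Suc j - 1))\<bar> * K^2
        \<le> \<bar>E * (x - real j)\<bar> * K^2 + \<bar>real j * C * x ^ (j - 1)\<bar> * K^2"
      unfolding eq by (simp add: distrib_right[symmetric] mult_right_mono abs_triangle_ineq)
    also have "\<dots> \<le> (e * (1 + real j) + real j * C) * K ^ Suc j"
      using b1 b2 by (simp add: algebra_simps)
    finally show "\<bar>ff (Suc j) x - (x ^ Suc j - real (Suc j choose 2) * x ^ (Suc j - 1))\<bar> * K^2
        \<le> (e * (1 + real j) + real j * C) * K ^ Suc j" .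
  qed
qed



lemma mb: assumes "1 \<le> K" "\<bar>x\<bar> \<le> K"
  shows "\<bar>x ^ j - real (j choose 2) * x ^ (j - 1)\<bar> \<le> (1 + real (j choose 2)) * K ^ j"
proof -
  have a: "\<bar>x ^ j\<bar> \<le> K ^ j" using assms by (simp add: pow_le_K)
  have "\<bar>x ^ (j - 1)\<bar> \<le> K ^ (j - 1)" using assms by (simp add: pow_le_K)
  also have "\<dots> \<le> K ^ j" using assms(1) by (intro power_increasing) auto
  finally have b: "\<bar>real (j choose 2) * x ^ (j - 1)\<bar> \<le> real (j choose 2) * K ^ j"
    by (simp add: abs_mult mult_left_mono)
  have "\<bar>x ^ j - real (j choose 2) * x ^ (j - 1)\<bar> \<le> \<bar>x ^ j\<bar> + \<bar>real (j choose 2) * x ^ (j - 1)\<bar>"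
    by (rule abs_triangle_ineq4)
  also have "\<dots> \<le> (1 + real (j choose 2)) * K ^ j" using a b by (simp add: algebra_simps)
  finally show ?thesis .
qed

definition Tt :: "nat \<Rightarrow> nat \<Rightarrow> real \<Rightarrow> real \<Rightarrow> real" where
  "Tt n p a b = b ^ p * a ^ (n - p) - real (p choose 2) * b ^ (p - 1) * a ^ (n - p)
      - real ((n - p) choose 2) * b ^ p * a ^ (n - p - 1)"

lemma prod_exp:
  assumes pn: "p \<le> n"
  shows "\<exists>c. \<forall>a b K. 1 \<le> K \<and> \<bar>a\<bar> \<le> K \<and> \<bar>b\<bar> \<le> K \<longrightarrow>
     \<bar>ff p b * ff (n - p) a - Tt n p a b\<bar> * K^2 \<le> c * K ^ n"
proof -
  define q where "q = n - p"
  have n: "n = p + q" using pn unfolding q_def by simp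
  obtain eb where eb: "\<And>x K. 1 \<le> K \<Longrightarrow> \<bar>x\<bar> \<le> K \<Longrightarrow>
     \<bar>ff p x - (x ^ p - real (p choose 2) * x ^ (p - 1))\<bar> * K^2 \<le> eb * K ^ p"
    using ff_exp[of p] by blast
  obtain ea where ea: "\<And>x K. 1 \<le> K \<Longrightarrow> \<bar>x\<bar> \<le> K \<Longrightarrow>
     \<bar>ff q x - (x ^ q - real (q choose 2) * x ^ (q - 1))\<bar> * K^2 \<le> ea * K ^ q"
    using ff_exp[of q] by blast
  have ea0: "ea \<ge> 0" using ea[of 1 0] by simp
  have eb0: "eb \<ge> 0" using eb[of 1 0] by simp
  define Cp where "Cp = real (p choose 2)"
  define Cq where "Cq = real (q choose 2)"
  have Cp0: "Cp \<ge> 0" and Cq0: "Cq \<ge> 0" unfolding Cp_def Cq_def by auto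
  show ?thesis
  proof (intro exI[of _ "Cp * Cq + (1 + Cp) * ea + eb * (1 + Cq) + eb * ea"] allI impI)
    fix a b K :: real assume h: "1 \<le> K \<and> \<bar>a\<bar> \<le> K \<and> \<bar>b\<bar> \<le> K"
    then have K1: "1 \<le> K" and ha: "\<bar>a\<bar> \<le> K" and hb: "\<bar>b\<bar> \<le> K" by auto
    define B where "B = b ^ p - Cp * b ^ (p - 1)"
    define A where "A = a ^ q - Cq * a ^ (q - 1)"
    define Eb where "Eb = ff p b - B"
    define Ea where "Ea = ff q a - A"
    have hEb: "\<bar>Eb\<bar> * K^2 \<le> eb * K ^ p" using eb[OF K1 hb] unfolding Eb_def B_def Cp_def .
    have hEa: "\<bar>Ea\<bar> * K^2 \<le> ea * K ^ q" using ea[OF K1 ha] unfolding Ea_def A_def Cq_def .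
    have hB: "\<bar>B\<bar> \<le> (1 + Cp) * K ^ p" using mb[OF K1 hb, of p] unfolding B_def Cp_def .
    have hA: "\<bar>A\<bar> \<le> (1 + Cq) * K ^ q" using mb[OF K1 ha, of q] unfolding A_def Cq_def .
    have Kp: "K ^ p * K ^ q = K ^ n" using n by (simp add: power_add)
    have eq: "ff p b * ff (n - p) a - Tt n p a b = Cp * Cq * b ^ (p - 1) * a ^ (q - 1) + B * Ea + Eb * A + Eb * Ea"
      unfolding Tt_def q_def[symmetric] Cp_def[symmetric] Cq_def[symmetric] Ea_def Eb_def A_def B_def
      by (simp add: algebra_simps)
    have t1: "\<bar>Cp * Cq * b ^ (p - 1) * a ^ (q - 1)\<bar> * K^2 \<le> Cp * Cq * K ^ n"
    proof (cases "p \<ge> 2 \<and> q \<ge> 2")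
      case True
      have "\<bar>b ^ (p - 1)\<bar> \<le> K ^ (p - 1)" using hb by (simp add: pow_le_K)
      moreover have "\<bar>a ^ (q - 1)\<bar> \<le> K ^ (q - 1)" using ha by (simp add: pow_le_K)
      ultimately have "\<bar>b ^ (p - 1)\<bar> * \<bar>a ^ (q - 1)\<bar> \<le> K ^ (p - 1) * K ^ (q - 1)"
        by (intro mult_mono) auto
      then have "Cp * Cq * (\<bar>b ^ (p - 1)\<bar> * \<bar>a ^ (q - 1)\<bar> * K^2) \<le> Cp * Cq * (K ^ (p - 1) * K ^ (q - 1) * K^2)"
        using Cp0 Cq0 by (intro mult_left_mono mult_right_mono) auto
      moreover have "K ^ (p - 1) * K ^ (q - 1) * K^2 = K ^ n"
      proof -
        have "n = (p - 1) + (q - 1) + 2" using True n by arith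
        then show ?thesis by (simp only: power_add)
      qed
      moreover have "\<bar>Cp * Cq * b ^ (p - 1) * a ^ (q - 1)\<bar> * K^2 = Cp * Cq * (\<bar>b ^ (p - 1)\<bar> * \<bar>a ^ (q - 1)\<bar> * K^2)"
        using Cp0 Cq0 by (simp add: abs_mult)
      ultimately show ?thesis by metis
    next
      case False
      then have "Cp * Cq = 0" unfolding Cp_def Cq_def by (auto simp: binomial_eq_0)
      then show ?thesis by (simp del: mult_eq_0_iff)
    qed
    have t2: "\<bar>B * Ea\<bar> * K^2 \<le> (1 + Cp) * ea * K ^ n"
    proof -
      have "\<bar>B * Ea\<bar> * K^2 = \<bar>B\<bar> * (\<bar>Ea\<bar> * K^2)" by (simp add: abs_mult)
      also have "\<dots> \<le> ((1 + Cp) * K ^ p) * (ea * K ^ q)"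
        by (rule mult_mono[OF hB hEa]) (use Cp0 K1 in auto)
      also have "\<dots> = (1 + Cp) * ea * K ^ n" using Kp by (simp add: algebra_simps)
      finally show ?thesis .
    qed
    have t3: "\<bar>Eb * A\<bar> * K^2 \<le> eb * (1 + Cq) * K ^ n"
    proof -
      have "\<bar>Eb * A\<bar> * K^2 = (\<bar>Eb\<bar> * K^2) * \<bar>A\<bar>" by (simp add: abs_mult)
      also have "\<dots> \<le> (eb * K ^ p) * ((1 + Cq) * K ^ q)"
        by (rule mult_mono[OF hEb hA]) (use eb0 K1 in auto)
      also have "\<dots> = eb * (1 + Cq) * K ^ n" using Kp by (simp add: algebra_simps)
      finally show ?thesis .
    qed
    have t4: "\<bar>Eb * Ea\<bar> * K^2 \<le> eb * ea * K ^ n"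
    proof -
      have K2: "K^2 \<ge> 1" using K1 by (simp add: one_le_power)
      have "\<bar>Eb * Ea\<bar> * K^2 \<le> (\<bar>Eb\<bar> * K^2) * (\<bar>Ea\<bar> * K^2)"
      proof -
        have "\<bar>Eb\<bar> * \<bar>Ea\<bar> * K^2 * 1 \<le> \<bar>Eb\<bar> * \<bar>Ea\<bar> * K^2 * K^2"
          by (rule mult_left_mono[OF K2]) auto
        then show ?thesis by (simp add: abs_mult algebra_simps)
      qed
      also have "\<dots> \<le> (eb * K ^ p) * (ea * K ^ q)"
        by (rule mult_mono[OF hEb hEa]) (use eb0 K1 in auto)
      also have "\<dots> = eb * ea * K ^ n" using Kp by (simp add: algebra_simps)
      finally show ?thesis .
    qed
    have "\<bar>ff p b * ff (n - p) a - Tt n p a b\<bar> * K^2 \<le>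
       \<bar>Cp * Cq * b ^ (p - 1) * a ^ (q - 1)\<bar> * K^2 + \<bar>B * Ea\<bar> * K^2 + \<bar>Eb * A\<bar> * K^2 + \<bar>Eb * Ea\<bar> * K^2"
    proof -
      have "\<bar>ff p b * ff (n - p) a - Tt n p a b\<bar> \<le>
       \<bar>Cp * Cq * b ^ (p - 1) * a ^ (q - 1)\<bar> + \<bar>B * Ea\<bar> + \<bar>Eb * A\<bar> + \<bar>Eb * Ea\<bar>"
        unfolding eq by (meson abs_triangle_ineq add_mono order_trans order_refl)
      then have "\<bar>ff p b * ff (n - p) a - Tt n p a b\<bar> * K^2 \<le>
       (\<bar>Cp * Cq * b ^ (p - 1) * a ^ (q - 1)\<bar> + \<bar>B * Ea\<bar> + \<bar>Eb * A\<bar> + \<bar>Eb * Ea\<bar>) * K^2"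
        by (rule mult_right_mono) simp
      then show ?thesis by (simp add: algebra_simps)
    qed
    also have "\<dots> \<le> (Cp * Cq + (1 + Cp) * ea + eb * (1 + Cq) + eb * ea) * K ^ n"
      using t1 t2 t3 t4 by (simp add: algebra_simps)
    finally show "\<bar>ff p b * ff (n - p) a - Tt n p a b\<bar> * K^2 \<le> (Cp * Cq + (1 + Cp) * ea + eb * (1 + Cq) + eb * ea) * K ^ n" .
  qed
qed

definition SS :: "nat \<Rightarrow> real \<Rightarrow> real \<Rightarrow> real" where
  "SS n a b = (\<Sum>p=0..n. real (n choose p) * (-1)^p * (ff p b * ff (n - p) a))"

lemma SS_exp: "\<exists>c. \<forall>a b K. 1 \<le> K \<and> \<bar>a\<bar> \<le> K \<and> \<bar>b\<bar> \<le> K \<longrightarrow>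
     \<bar>SS n a b - (\<Sum>p=0..n. real (n choose p) * (-1)^p * Tt n p a b)\<bar> * K^2 \<le> c * K ^ n"
proof -
  have "\<forall>p\<in>{0..n}. \<exists>c. \<forall>a b K. 1 \<le> K \<and> \<bar>a\<bar> \<le> K \<and> \<bar>b\<bar> \<le> K \<longrightarrow>
     \<bar>ff p b * ff (n - p) a - Tt n p a b\<bar> * K^2 \<le> c * K ^ n"
    using prod_exp by auto
  then obtain cf where cf: "\<And>p a b K. p \<in> {0..n} \<Longrightarrow> 1 \<le> K \<Longrightarrow> \<bar>a\<bar> \<le> K \<Longrightarrow> \<bar>b\<bar> \<le> K \<Longrightarrow>
     \<bar>ff p b * ff (n - p) a - Tt n p a b\<bar> * K^2 \<le> cf p * K ^ n"
    by metis
  show ?thesis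
  proof (intro exI[of _ "\<Sum>p=0..n. real (n choose p) * cf p"] allI impI)
    fix a b K :: real assume h: "1 \<le> K \<and> \<bar>a\<bar> \<le> K \<and> \<bar>b\<bar> \<le> K"
    have "SS n a b - (\<Sum>p=0..n. real (n choose p) * (-1)^p * Tt n p a b) =
       (\<Sum>p=0..n. real (n choose p) * (-1)^p * (ff p b * ff (n - p) a - Tt n p a b))"
      unfolding SS_def by (simp add: sum_subtractf algebra_simps)
    then have "\<bar>SS n a b - (\<Sum>p=0..n. real (n choose p) * (-1)^p * Tt n p a b)\<bar> * K^2 \<le>
       (\<Sum>p=0..n. \<bar>real (n choose p) * (-1)^p * (ff p b * ff (n - p) a - Tt n p a b)\<bar>) * K^2"
      by (simp add: mult_right_mono sum_abs)
    also have "\<dots> = (\<Sum>p=0..n. real (n choose p) * (\<bar>ff p b * ff (n - p) a - Tt n p a b\<bar> * K^2))"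
      unfolding sum_distrib_right by (rule sum.cong[OF refl]) (simp add: abs_mult power_abs)
    also have "\<dots> \<le> (\<Sum>p=0..n. real (n choose p) * (cf p * K ^ n))"
      by (rule sum_mono, rule mult_left_mono) (use cf h in auto)
    also have "\<dots> = (\<Sum>p=0..n. real (n choose p) * cf p) * K ^ n"
      unfolding sum_distrib_right by (rule sum.cong[OF refl]) (simp add: algebra_simps)
    finally show "\<bar>SS n a b - (\<Sum>p=0..n. real (n choose p) * (-1)^p * Tt n p a b)\<bar> * K^2 \<le> (\<Sum>p=0..n. real (n choose p) * cf p) * K ^ n" .
  qed
qed



declare binomial_Suc_Suc[simp del]

lemma I1: "(\<Sum>p=0..n. real (n choose p) * (-1)^p * (b ^ p * a ^ (n - p))) = (a - b) ^ n"
proof -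
  have "(a - b) ^ n = (-b + a) ^ n" by simp
  also have "\<dots> = (\<Sum>k\<le>n. real (n choose k) * (-b)^k * a^(n-k))" by (rule binomial_ring)
  also have "\<dots> = (\<Sum>p=0..n. real (n choose p) * (-1)^p * (b ^ p * a ^ (n - p)))"
    unfolding atLeast0AtMost[symmetric]
  proof (rule sum.cong[OF refl])
    fix p show "real (n choose p) * (-b)^p * a^(n-p) = real (n choose p) * (-1)^p * (b ^ p * a ^ (n - p))"
      by (simp only: power_minus[of b] mult.assoc)
  qed
  finally show ?thesis by (rule sym)
qed

lemma cm1: "i \<le> m \<Longrightarrow> real (Suc (Suc m) choose Suc (Suc i)) * real (Suc (Suc i) choose 2)
   = real (Suc (Suc m) choose 2) * real (m choose i)"
proof -
  assume "i \<le> m"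
  then have "(Suc (Suc m) choose Suc (Suc i)) * (Suc (Suc i) choose 2) = (Suc (Suc m) choose 2) * ((Suc (Suc m) - 2) choose (Suc (Suc i) - 2))"
    by (intro choose_mult) auto
  then have "(Suc (Suc m) choose Suc (Suc i)) * (Suc (Suc i) choose 2) = (Suc (Suc m) choose 2) * (m choose i)" by simp
  then show ?thesis by (metis of_nat_mult)
qed

lemma cm2: "i \<le> m \<Longrightarrow> real (Suc (Suc m) choose i) * real ((Suc (Suc m) - i) choose 2)
   = real (Suc (Suc m) choose 2) * real (m choose i)"
proof -
  assume im: "i \<le> m"
  have s1: "Suc (Suc m) choose i = Suc (Suc m) choose (Suc (Suc m) - i)" using im by (intro binomial_symmetric) auto
  have "(Suc (Suc m) choose (Suc (Suc m) - i)) * ((Suc (Suc m) - i) choose 2) = (Suc (Suc m) choose 2) * ((Suc (Suc m) - 2) choose (Suc (Suc m) - i - 2))"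
    using im by (intro choose_mult) auto
  also have "(Suc (Suc m) - 2) choose (Suc (Suc m) - i - 2) = m choose i"
  proof -
    have "(Suc (Suc m) - 2) choose (Suc (Suc m) - i - 2) = m choose (m - i)" by simp
    also have "\<dots> = m choose i" using im by (metis binomial_symmetric diff_diff_cancel)
    finally show ?thesis .
  qed
  finally have "(Suc (Suc m) choose i) * ((Suc (Suc m) - i) choose 2) = (Suc (Suc m) choose 2) * (m choose i)"
    using s1 by simp
  then show ?thesis by (metis of_nat_mult)
qed

lemma I2: "(\<Sum>p=0..Suc (Suc m). real (Suc (Suc m) choose p) * (-1)^p * (real (p choose 2) * b ^ (p - 1) * a ^ (Suc (Suc m) - p)))
   = real (Suc (Suc m) choose 2) * b * (a - b) ^ m"
proof -
  define g where "g = (\<lambda>p. real (Suc (Suc m) choose p) * (-1)^p * (real (p choose 2) * b ^ (p - 1) * a ^ (Suc (Suc m) - p)))"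
  have "(\<Sum>p=0..Suc (Suc m). g p) = g 0 + (g 1 + (\<Sum>p=0..m. g (Suc (Suc p))))"
    by (simp only: sum.atLeast0_atMost_Suc_shift One_nat_def o_def)
  also have "g 0 = 0" unfolding g_def by simp
  also have "g 1 = 0" unfolding g_def by simp
  also have "(\<Sum>p=0..m. g (Suc (Suc p))) = (\<Sum>p=0..m. real (Suc (Suc m) choose 2) * b * (real (m choose p) * (-1)^p * (b ^ p * a ^ (m - p))))"
  proof (rule sum.cong[OF refl])
    fix p assume "p \<in> {0..m}"
    then have pm: "p \<le> m" by simp
    have "g (Suc (Suc p)) = (real (Suc (Suc m) choose Suc (Suc p)) * real (Suc (Suc p) choose 2)) * ((-1)^p * (b * b ^ p) * a ^ (m - p))"
      unfolding g_def by (simp add: mult_ac)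
    also have "\<dots> = real (Suc (Suc m) choose 2) * b * (real (m choose p) * (-1)^p * (b ^ p * a ^ (m - p)))"
      unfolding cm1[OF pm] by (simp add: mult_ac)
    finally show "g (Suc (Suc p)) = real (Suc (Suc m) choose 2) * b * (real (m choose p) * (-1)^p * (b ^ p * a ^ (m - p)))" .
  qed
  also have "(\<Sum>p=0..m. real (Suc (Suc m) choose 2) * b * (real (m choose p) * (-1)^p * (b ^ p * a ^ (m - p)))) = real (Suc (Suc m) choose 2) * b * (a - b) ^ m"
    by (simp only: sum_distrib_left[symmetric] I1)
  finally show ?thesis unfolding g_def by simp
qed

lemma I3: "(\<Sum>p=0..Suc (Suc m). real (Suc (Suc m) choose p) * (-1)^p * (real ((Suc (Suc m) - p) choose 2) * b ^ p * a ^ (Suc (Suc m) - p - 1)))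
   = real (Suc (Suc m) choose 2) * a * (a - b) ^ m"
proof -
  define g where "g = (\<lambda>p. real (Suc (Suc m) choose p) * (-1)^p * (real ((Suc (Suc m) - p) choose 2) * b ^ p * a ^ (Suc (Suc m) - p - 1)))"
  have "(\<Sum>p=0..Suc (Suc m). g p) = (\<Sum>p=0..m. g p) + g (Suc m) + g (Suc (Suc m))"
    by (simp only: sum.atLeast0_atMost_Suc)
  also have "g (Suc m) = 0" unfolding g_def by (simp add: Suc_diff_le binomial_eq_0)
  also have "g (Suc (Suc m)) = 0" unfolding g_def by simp
  also have "(\<Sum>p=0..m. g p) = (\<Sum>p=0..m. real (Suc (Suc m) choose 2) * a * (real (m choose p) * (-1)^p * (b ^ p * a ^ (m - p))))"
  proof (rule sum.cong[OF refl])
    fix p assume "p \<in> {0..m}"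
    then have pm: "p \<le> m" by simp
    have e: "Suc (Suc m) - p - 1 = Suc (m - p)" using pm by simp
    have "g p = (real (Suc (Suc m) choose p) * real ((Suc (Suc m) - p) choose 2)) * ((-1)^p * b ^ p * (a * a ^ (m - p)))"
      unfolding g_def e by (simp add: mult_ac)
    also have "\<dots> = real (Suc (Suc m) choose 2) * a * (real (m choose p) * (-1)^p * (b ^ p * a ^ (m - p)))"
      unfolding cm2[OF pm] by (simp add: mult_ac)
    finally show "g p = real (Suc (Suc m) choose 2) * a * (real (m choose p) * (-1)^p * (b ^ p * a ^ (m - p)))" .
  qed
  also have "(\<Sum>p=0..m. real (Suc (Suc m) choose 2) * a * (real (m choose p) * (-1)^p * (b ^ p * a ^ (m - p)))) = real (Suc (Suc m) choose 2) * a * (a - b) ^ m"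
    by (simp only: sum_distrib_left[symmetric] I1)
  finally show ?thesis unfolding g_def by simp
qed

lemma Tt_sum: "(\<Sum>p=0..n. real (n choose p) * (-1)^p * Tt n p a b) = (a - b) ^ n - real (n choose 2) * (a + b) * (a - b) ^ (n - 2)"
proof -
  have split: "(\<Sum>p=0..n. real (n choose p) * (-1)^p * Tt n p a b) =
     (\<Sum>p=0..n. real (n choose p) * (-1)^p * (b ^ p * a ^ (n - p)))
   - (\<Sum>p=0..n. real (n choose p) * (-1)^p * (real (p choose 2) * b ^ (p - 1) * a ^ (n - p)))
   - (\<Sum>p=0..n. real (n choose p) * (-1)^p * (real ((n - p) choose 2) * b ^ p * a ^ (n - p - 1)))"
    unfolding Tt_def sum_subtractf[symmetric] by (rule sum.cong[OF refl]) (simp add: right_diff_distrib)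
  show ?thesis
  proof (cases "n \<ge> 2")
    case True
    then obtain m where m: "n = Suc (Suc m)" by (metis add_2_eq_Suc le_Suc_ex)
    show ?thesis unfolding split I1 unfolding m I2 I3 by (simp add: algebra_simps)
  next
    case False
    then have z1: "(\<Sum>p=0..n. real (n choose p) * (-1)^p * (real (p choose 2) * b ^ (p - 1) * a ^ (n - p))) = 0"
      by (intro sum.neutral) (auto simp: binomial_eq_0)
    have z2: "(\<Sum>p=0..n. real (n choose p) * (-1)^p * (real ((n - p) choose 2) * b ^ p * a ^ (n - p - 1))) = 0"
      using False by (intro sum.neutral) (auto simp: binomial_eq_0)
    have z3: "real (n choose 2) = 0" using False by (simp add: binomial_eq_0)
    show ?thesis unfolding split I1 z1 z2 z3 by simp
  qed
qed

lemma asym: "\<exists>c. \<forall>a b K. 1 \<le> K \<and> \<bar>a\<bar> \<le> K \<and> \<bar>b\<bar> \<le> K \<longrightarrow>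
     \<bar>SS n a b - ((a - b) ^ n - real (n choose 2) * (a + b) * (a - b) ^ (n - 2))\<bar> * K^2 \<le> c * K ^ n"
  using SS_exp[of n] unfolding Tt_sum .



declare binomial_Suc_Suc[simp del]

lemma DS_eval:
  fixes c :: int
  assumes c: "c = int n + int N + 2 - 2 * int w"
  shows "(\<Sum>p=0..Suc n. \<Sum>q=0..N. real (Suc n choose p) * real (N choose q) * (-1)^(Suc n - p) *
           sgn (real_of_int c + (2 * real p - real (Suc n)) + (2 * real q - real N)))
       = 2 * (-1)^n * (\<Sum>p=0..n. real (n choose p) * (-1)^p * (if p < w then real (N choose (w - 1 - p)) else 0))"
proof -
  have o: "odd (c + int (Suc n) + int N)" using c by presburger
  have "(\<Sum>q=0..N. real (N choose q) * (if c + 2 * int p - int (Suc n) + 2 * int q - int N = -1 then 1 else 0))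
      = (\<Sum>q=0..N. real (N choose q) * (if q + p + 1 = w then 1 else 0))" for p
    by (rule sum.cong[OF refl]) (use c in auto)
  then show ?thesis unfolding double_sum[OF o] count_q by simp
qed

lemma conv:
  assumes Nn: "N + n + 2 = u + v" and u1: "u \<ge> 1" and v1: "v \<ge> 1" and pn: "p \<le> n"
  shows "(if p < v then real (N choose (v - 1 - p)) else 0)
     = fact N / (fact (u - 1) * fact (v - 1)) * (ff p (real (v - 1)) * ff (n - p) (real (u - 1)))"
proof (cases "p < v")
  case pv: True
  show ?thesis
  proof (cases "n - p \<le> u - 1")
    case True
    have le: "v - 1 - p \<le> N" using True pv Nn pn u1 by arith
    have e: "N - (v - 1 - p) = u - 1 - (n - p)" using True pv Nn pn u1 by arith
    have pv1: "p \<le> v - 1" using pv by simp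
    have "real (N choose (v - 1 - p)) = fact N / (fact (v - 1 - p) * fact (u - 1 - (n - p)))"
      using binomial_fact[OF le] unfolding e .
    moreover have "ff p (real (v - 1)) = fact (v - 1) / fact (v - 1 - p)" using pv1 by (simp add: ff_nat)
    moreover have "ff (n - p) (real (u - 1)) = fact (u - 1) / fact (u - 1 - (n - p))" using True by (simp add: ff_nat)
    ultimately show ?thesis using pv by simp
  next
    case False
    have gt: "v - 1 - p > N" using False pv Nn pn u1 by arith
    have "ff (n - p) (real (u - 1)) = 0" using False by (simp add: ff_nat)
    then show ?thesis using pv gt by (simp add: binomial_eq_0)
  qed
next
  case False
  have "ff p (real (v - 1)) = 0" using False v1 by (subst ff_nat) simp
  then show ?thesis using False by simp
qed

lemma DS_SS:
  fixes c :: int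
  assumes c: "c = int n + int N + 2 - 2 * int v" and Nn: "N + n + 2 = u + v" and u1: "u \<ge> 1" and v1: "v \<ge> 1"
  shows "(\<Sum>p=0..Suc n. \<Sum>q=0..N. real (Suc n choose p) * real (N choose q) * (-1)^(Suc n - p) *
           sgn (real_of_int c + (2 * real p - real (Suc n)) + (2 * real q - real N)))
       = 2 * (-1)^n * (fact N / (fact (u - 1) * fact (v - 1))) * SS n (real (u - 1)) (real (v - 1))"
proof -
  have "(\<Sum>p=0..n. real (n choose p) * (-1)^p * (if p < v then real (N choose (v - 1 - p)) else 0))
     = (\<Sum>p=0..n. real (n choose p) * (-1)^p * (fact N / (fact (u - 1) * fact (v - 1)) * (ff p (real (v - 1)) * ff (n - p) (real (u - 1)))))"
    by (rule sum.cong[OF refl]) (simp add: conv[OF Nn u1 v1])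
  also have "\<dots> = (fact N / (fact (u - 1) * fact (v - 1))) * SS n (real (u - 1)) (real (v - 1))"
    unfolding SS_def sum_distrib_left by (rule sum.cong[OF refl]) (simp add: mult_ac)
  finally show ?thesis unfolding DS_eval[OF c] by simp
qed

lemma num_gen:
  fixes H :: "real \<Rightarrow> real \<Rightarrow> real \<Rightarrow> real"
  assumes k1: "k \<ge> 1" and I: "I \<subseteq> {2..k}" and tI: "card I = Suc n"
  shows "(\<Sum>x\<in>cube k. H (x 1) (\<Sum>i\<in>I. x i) (\<Sum>i\<in>{2..k} - I. x i) * (\<Prod>i\<in>I. x i))
     = (\<Sum>p=0..Suc n. \<Sum>q=0..k - 1 - Suc n. real (Suc n choose p) * real ((k - 1 - Suc n) choose q) * (-1)^(Suc n - p) *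
         (H 1 (2 * real p - real (Suc n)) (2 * real q - real (k - 1 - Suc n)) + H (-1) (2 * real p - real (Suc n)) (2 * real q - real (k - 1 - Suc n))))"
proof -
  have cR: "card ({2..k} - I) = k - 1 - Suc n"
    using I tI by (simp add: card_Diff_subset finite_subset)
  show ?thesis unfolding decomp[OF I k1, of H] cR tI ..
qed

lemma sum_split_I:
  fixes I :: "nat set" and x :: "nat \<Rightarrow> real"
  assumes I: "I \<subseteq> {2..k}"
  shows "(\<Sum>i\<in>{2..k}. x i) = (\<Sum>i\<in>I. x i) + (\<Sum>i\<in>{2..k} - I. x i)"
  using sum.subset_diff[OF I, of x] by simp

lemma card_bound:
  fixes I :: "nat set"
  assumes I: "I \<subseteq> {2..k}"
  shows "card I \<le> k - 1"
  using card_mono[OF _ I] by simp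

lemma num_I:
  assumes k1: "k \<ge> 1" and I: "I \<subseteq> {2..k}" and tI: "card I = Suc n"
    and uv: "u + v = k" and u1: "u \<ge> 1" and v1: "v \<ge> 1"
  shows "(\<Sum>x\<in>cube k. sgn ((real u - real v) * x 1 + (\<Sum>i\<in>{2..k}. x i)) * (\<Prod>i\<in>I. x i))
     = 2 * (-1)^n * (fact (k - 1 - Suc n) / (fact (u - 1) * fact (v - 1))) *
        (SS n (real (u - 1)) (real (v - 1)) + SS n (real (v - 1)) (real (u - 1)))"
proof -
  define N where "N = k - 1 - Suc n"
  have Nn: "N + n + 2 = u + v" using card_bound[OF I] tI uv unfolding N_def by simp
  have Nn': "N + n + 2 = v + u" using Nn by simp
  define H where "H = (\<lambda>e \<alpha> \<beta>::real. sgn ((real u - real v) * e + \<alpha> + \<beta>))"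
  define c1 where "c1 = int n + int N + 2 - 2 * int v"
  define c2 where "c2 = int n + int N + 2 - 2 * int u"
  have r1: "real_of_int c1 = real u - real v" unfolding c1_def using Nn by linarith
  have r2: "real_of_int c2 = real v - real u" unfolding c2_def using Nn by linarith
  have "(\<Sum>x\<in>cube k. sgn ((real u - real v) * x 1 + (\<Sum>i\<in>{2..k}. x i)) * (\<Prod>i\<in>I. x i))
     = (\<Sum>x\<in>cube k. H (x 1) (\<Sum>i\<in>I. x i) (\<Sum>i\<in>{2..k} - I. x i) * (\<Prod>i\<in>I. x i))"
    unfolding H_def sum_split_I[OF I] by (simp add: add.assoc)
  also have "\<dots> = (\<Sum>p=0..Suc n. \<Sum>q=0..N. real (Suc n choose p) * real (N choose q) * (-1)^(Suc n - p) *
           sgn (real_of_int c1 + (2 * real p - real (Suc n)) + (2 * real q - real N)))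
     + (\<Sum>p=0..Suc n. \<Sum>q=0..N. real (Suc n choose p) * real (N choose q) * (-1)^(Suc n - p) *
           sgn (real_of_int c2 + (2 * real p - real (Suc n)) + (2 * real q - real N)))"
    unfolding num_gen[OF k1 I tI, where H=H] N_def[symmetric] sum.distrib[symmetric] r1 r2
    unfolding H_def by (intro sum.cong refl) (simp add: algebra_simps)
  also have "\<dots> = 2 * (-1)^n * (fact N / (fact (u - 1) * fact (v - 1))) * SS n (real (u - 1)) (real (v - 1))
     + 2 * (-1)^n * (fact N / (fact (v - 1) * fact (u - 1))) * SS n (real (v - 1)) (real (u - 1))"
    unfolding DS_SS[OF c1_def Nn u1 v1] DS_SS[OF c2_def Nn' v1 u1] by simp
  also have "\<dots> = 2 * (-1)^n * (fact (k - 1 - Suc n) / (fact (u - 1) * fact (v - 1))) *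
        (SS n (real (u - 1)) (real (v - 1)) + SS n (real (v - 1)) (real (u - 1)))"
    unfolding N_def by (simp add: field_simps)
  finally show ?thesis .
qed

lemma num_J:
  assumes k1: "k \<ge> 1" and I: "I \<subseteq> {2..k}" and tI: "card I = Suc n"
    and uv: "u + v = k" and u1: "u \<ge> 1" and v1: "v \<ge> 1"
  shows "(\<Sum>x\<in>cube k. sgn ((real u - real v) * x 1 + (\<Sum>i\<in>{2..k}. x i)) * (\<Prod>i\<in>insert 1 I. x i))
     = 2 * (-1)^n * (fact (k - 1 - Suc n) / (fact (u - 1) * fact (v - 1))) *
        (SS n (real (u - 1)) (real (v - 1)) - SS n (real (v - 1)) (real (u - 1)))"
proof -
  define N where "N = k - 1 - Suc n"
  have Nn: "N + n + 2 = u + v" using card_bound[OF I] tI uv unfolding N_def by simp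
  have Nn': "N + n + 2 = v + u" using Nn by simp
  define H where "H = (\<lambda>e \<alpha> \<beta>::real. e * sgn ((real u - real v) * e + \<alpha> + \<beta>))"
  define c1 where "c1 = int n + int N + 2 - 2 * int v"
  define c2 where "c2 = int n + int N + 2 - 2 * int u"
  have r1: "real_of_int c1 = real u - real v" unfolding c1_def using Nn by linarith
  have r2: "real_of_int c2 = real v - real u" unfolding c2_def using Nn by linarith
  have fI: "finite I" using I finite_subset by blast
  have nI: "1 \<notin> I" using I by auto
  have "(\<Sum>x\<in>cube k. sgn ((real u - real v) * x 1 + (\<Sum>i\<in>{2..k}. x i)) * (\<Prod>i\<in>insert 1 I. x i))
     = (\<Sum>x\<in>cube k. H (x 1) (\<Sum>i\<in>I. x i) (\<Sum>i\<in>{2..k} - I. x i) * (\<Prod>i\<in>I. x i))"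
    unfolding H_def sum_split_I[OF I] prod.insert[OF fI nI] by (simp add: add.assoc mult_ac)
  also have "\<dots> = (\<Sum>p=0..Suc n. \<Sum>q=0..N. real (Suc n choose p) * real (N choose q) * (-1)^(Suc n - p) *
           sgn (real_of_int c1 + (2 * real p - real (Suc n)) + (2 * real q - real N)))
     - (\<Sum>p=0..Suc n. \<Sum>q=0..N. real (Suc n choose p) * real (N choose q) * (-1)^(Suc n - p) *
           sgn (real_of_int c2 + (2 * real p - real (Suc n)) + (2 * real q - real N)))"
    unfolding num_gen[OF k1 I tI, where H=H] N_def[symmetric] sum_subtractf[symmetric] r1 r2
    unfolding H_def by (intro sum.cong refl) (simp add: algebra_simps)
  also have "\<dots> = 2 * (-1)^n * (fact N / (fact (u - 1) * fact (v - 1))) * SS n (real (u - 1)) (real (v - 1))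
     - 2 * (-1)^n * (fact N / (fact (v - 1) * fact (u - 1))) * SS n (real (v - 1)) (real (u - 1))"
    unfolding DS_SS[OF c1_def Nn u1 v1] DS_SS[OF c2_def Nn' v1 u1] by simp
  also have "\<dots> = 2 * (-1)^n * (fact (k - 1 - Suc n) / (fact (u - 1) * fact (v - 1))) *
        (SS n (real (u - 1)) (real (v - 1)) - SS n (real (v - 1)) (real (u - 1)))"
    unfolding N_def by (simp add: field_simps)
  finally show ?thesis .
qed

lemma sgn_odd: "sgn (2 * real_of_int z + 1) = (if z \<ge> 0 then 1 else -1)"
  by (auto simp: sgn_real_def)

lemma num_1:
  assumes k1: "k \<ge> 1" and uv: "u + v = k" and u1: "u \<ge> 1" and v1: "v \<ge> 1" and vu: "v \<le> u"
  shows "(\<Sum>x\<in>cube k. sgn ((real u - real v) * x 1 + (\<Sum>i\<in>{2..k}. x i)) * x 1)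
     = 2 ^ k - 4 * (\<Sum>l = 0..<v. real ((k - 1) choose l))"
proof -
  define H where "H = (\<lambda>e \<alpha> \<beta>::real. e * sgn ((real u - real v) * e + \<alpha> + \<beta>))"
  have e0: "{} \<subseteq> {2..k}" by simp
  have "(\<Sum>x\<in>cube k. sgn ((real u - real v) * x 1 + (\<Sum>i\<in>{2..k}. x i)) * x 1)
     = (\<Sum>x\<in>cube k. H (x 1) (\<Sum>i\<in>{}. x i) (\<Sum>i\<in>{2..k} - {}. x i) * (\<Prod>i\<in>{}. x i))"
    unfolding H_def by (simp add: mult_ac)
  also have "\<dots> = (\<Sum>q=0..k-1. real ((k-1) choose q) * (H 1 0 (2 * real q - real (k - 1)) + H (-1) 0 (2 * real q - real (k - 1))))"
    unfolding decomp[OF e0 k1, where H=H] by simp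
  also have "\<dots> = (\<Sum>q=0..k-1. real ((k-1) choose q) * (2 - 2 * (if q < v then 1 else 0) - 2 * (if u \<le> q then 1 else 0)))"
  proof (rule sum.cong[OF refl])
    fix q assume "q \<in> {0..k-1}"
    have a1: "(real u - real v) * 1 + 0 + (2 * real q - real (k - 1)) = 2 * real_of_int (int q - int v) + 1"
      using uv k1 by (simp add: of_nat_diff)
    have a2: "(real u - real v) * (-1) + 0 + (2 * real q - real (k - 1)) = 2 * real_of_int (int q - int u) + 1"
      using uv k1 by (simp add: of_nat_diff)
    show "real ((k-1) choose q) * (H 1 0 (2 * real q - real (k - 1)) + H (-1) 0 (2 * real q - real (k - 1)))
       = real ((k-1) choose q) * (2 - 2 * (if q < v then 1 else 0) - 2 * (if u \<le> q then 1 else 0))"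
      unfolding H_def using vu by (simp only: a1 a2 sgn_odd) auto
  qed
  also have "\<dots> = 2 * (\<Sum>q=0..k-1. real ((k-1) choose q)) - 2 * (\<Sum>q=0..k-1. real ((k-1) choose q) * (if q < v then 1 else 0))
      - 2 * (\<Sum>q=0..k-1. real ((k-1) choose q) * (if u \<le> q then 1 else 0))"
    by (simp add: sum_subtractf sum_distrib_left sum.distrib algebra_simps)
  also have "(\<Sum>q=0..k-1. real ((k-1) choose q)) = 2 ^ (k - 1)"
  proof -
    have "(\<Sum>q=0..k-1. real ((k-1) choose q)) = real (\<Sum>q\<le>k-1. (k-1) choose q)"
      by (simp add: atLeast0AtMost)
    then show ?thesis by (simp add: choose_row_sum)
  qed
  also have "(\<Sum>q=0..k-1. real ((k-1) choose q) * (if u \<le> q then 1 else 0)) = (\<Sum>q=0..k-1. real ((k-1) choose q) * (if q < v then 1 else 0))"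
  proof -
    have "(\<Sum>q=0..k-1. real ((k-1) choose q) * (if u \<le> q then 1 else 0))
        = (\<Sum>q=0..k-1. real ((k-1) choose (k - 1 + 0 - q)) * (if u \<le> k - 1 + 0 - q then 1 else 0))"
      by (rule sum.atLeastAtMost_rev)
    also have "\<dots> = (\<Sum>q=0..k-1. real ((k-1) choose q) * (if q < v then 1 else 0))"
    proof (rule sum.cong[OF refl])
      fix q assume "q \<in> {0..k-1}"
      then have qk: "q \<le> k - 1" by simp
      have "(k - 1) choose (k - 1 - q) = (k - 1) choose q" using qk
        by (metis binomial_symmetric diff_diff_cancel)
      moreover have "(u \<le> k - 1 - q) = (q < v)" using qk uv u1 by arith
      ultimately show "real ((k-1) choose (k - 1 + 0 - q)) * (if u \<le> k - 1 + 0 - q then 1 else 0) = real ((k-1) choose q) * (if q < v then 1 else 0)"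
        by simp
    qed
    finally show ?thesis .
  qed
  also have "(\<Sum>q=0..k-1. real ((k-1) choose q) * (if q < v then 1 else 0)) = (\<Sum>l = 0..<v. real ((k - 1) choose l))"
  proof -
    have "(\<Sum>q=0..k-1. real ((k-1) choose q) * (if q < v then 1 else 0)) = (\<Sum>q\<in>{q\<in>{0..k-1}. q < v}. real ((k-1) choose q))"
    proof -
      have "(\<Sum>q=0..k-1. real ((k-1) choose q) * (if q < v then 1 else 0)) = (\<Sum>q\<in>{0..k-1}. if q < v then real ((k-1) choose q) else 0)"
        by (rule sum.cong) auto
      also have "\<dots> = (\<Sum>q\<in>{q\<in>{0..k-1}. q < v}. real ((k-1) choose q))"
        by (rule sum.inter_filter[symmetric]) simp
      finally show ?thesis .
    qed
    also have "{q\<in>{0..k-1}. q < v} = {0..<v}" using uv u1 by auto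
    finally show ?thesis .
  qed
  finally show ?thesis using k1 by (simp add: power_eq_if)
qed



declare binomial_Suc_Suc[simp del]

lemma ch2: "real (Suc (Suc m) choose 2) = (real m + 2) * (real m + 1) / 2"
proof -
  have "real (Suc (Suc m) choose 2) = fact (Suc (Suc m)) / (fact 2 * fact (Suc (Suc m) - 2))"
    by (rule binomial_fact) simp
  also have "\<dots> = (real m + 2) * (real m + 1) / 2"
    by (simp add: fact_numeral numeral_2_eq_2 field_simps)
  finally show ?thesis .
qed

lemma Mclose:
  fixes \<delta> K :: real and t n :: nat
  assumes t: "t = Suc n" and K1: "K \<ge> 1" and dk: "\<bar>\<delta>\<bar> \<le> 1"
  shows "\<bar>(\<delta> ^ (t - 1) * K ^ (t - 1) - (real t - 1) * (real t - 2) / 2 * \<delta> powi (int t - 3) * K powi (int t - 2))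
     - ((\<delta> * K) ^ n - real (n choose 2) * (K - 2) * (\<delta> * K) ^ (n - 2))\<bar> * K^2 \<le> 2 * real (n choose 2) * K ^ n"
proof (cases "n \<ge> 2")
  case True
  then obtain m where m: "n = Suc (Suc m)" by (metis add_2_eq_Suc le_Suc_ex)
  have i1: "int t - 3 = int m" using t m by simp
  have i2: "int t - 2 = int (Suc m)" using t m by simp
  have co: "(real t - 1) * (real t - 2) / 2 = real (n choose 2)" unfolding m ch2 using t m by (simp add: algebra_simps)
  define C where "C = real (n choose 2)"
  have C0: "C \<ge> 0" unfolding C_def by simp
  have "(\<delta> ^ (t - 1) * K ^ (t - 1) - (real t - 1) * (real t - 2) / 2 * \<delta> powi (int t - 3) * K powi (int t - 2))
     - ((\<delta> * K) ^ n - real (n choose 2) * (K - 2) * (\<delta> * K) ^ (n - 2)) = - (2 * C * (\<delta> * K) ^ m)"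
    unfolding i1 i2 power_int_of_nat co C_def[symmetric] using t m by (simp add: power_mult_distrib algebra_simps)
  moreover have "\<bar>2 * C * (\<delta> * K) ^ m\<bar> * K^2 \<le> 2 * C * K ^ n"
  proof -
    have "\<bar>(\<delta> * K) ^ m\<bar> \<le> K ^ m"
    proof -
      have "\<bar>\<delta> * K\<bar> \<le> K" using dk K1 by (simp add: abs_mult mult_left_le_one_le)
      then show ?thesis by (rule pow_le_K)
    qed
    then have "\<bar>(\<delta> * K) ^ m\<bar> * K^2 \<le> K ^ m * K^2" by (simp add: mult_right_mono)
    then have "2 * C * (\<bar>(\<delta> * K) ^ m\<bar> * K^2) \<le> 2 * C * (K ^ m * K^2)" using C0 by (simp add: mult_left_mono)
    moreover have "K ^ m * K^2 = K ^ n" using m by (simp add: power_add[symmetric])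
    moreover have "\<bar>2 * C * (\<delta> * K) ^ m\<bar> * K^2 = 2 * C * (\<bar>(\<delta> * K) ^ m\<bar> * K^2)" using C0 by (simp add: abs_mult)
    ultimately show ?thesis by metis
  qed
  ultimately show ?thesis unfolding C_def by simp
next
  case False
  then have z: "real (n choose 2) = 0" by (simp add: binomial_eq_0)
  have z2: "(real t - 1) * (real t - 2) = 0" using False t by (cases n) auto
  have w: "(real t - 1) * (real t - 2) / 2 * \<delta> powi (int t - 3) * K powi (int t - 2) = 0" using z2 by simp
  have tn: "t - 1 = n" using t by simp
  show ?thesis unfolding w z tn by (simp add: power_mult_distrib)
qed

lemma Mswap: "(b - a) ^ n - real (n choose 2) * (b + a) * (b - a) ^ (n - 2)
   = (-1) ^ n * ((a - b) ^ n - real (n choose 2) * (a + b) * (a - b) ^ (n - 2))"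
proof (cases "n \<ge> 2")
  case True
  then obtain m where m: "n = Suc (Suc m)" by (metis add_2_eq_Suc le_Suc_ex)
  have "(b - a) ^ j = (-1) ^ j * (a - b) ^ j" for j :: nat
    by (metis minus_diff_eq power_minus)
  then show ?thesis unfolding m by (simp add: algebra_simps)
next
  case False
  then have z: "real (n choose 2) = 0" by (simp add: binomial_eq_0)
  have e: "(b - a) ^ n = (-1) ^ n * (a - b) ^ n" by (metis minus_diff_eq power_minus)
  show ?thesis unfolding z e by simp
qed

lemma powi_K: "(K::real) \<ge> 1 \<Longrightarrow> K powi (int (Suc n) - 3) = K ^ n / K^2"
proof -
  assume K: "K \<ge> 1"
  have "int (Suc n) - 3 = int n - 2" by simp
  then have "K powi (int (Suc n) - 3) = K powi (int n) / K powi 2"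
    using K power_int_diff[of K "int n" 2] by simp
  then show ?thesis by simp
qed

lemma R_bound:
  fixes Q \<delta> K c :: real and t n :: nat
  assumes t: "t = Suc n" and K1: "K \<ge> 1" and dk: "\<bar>\<delta>\<bar> \<le> 1"
    and Q: "\<bar>Q - ((\<delta> * K) ^ n - real (n choose 2) * (K - 2) * (\<delta> * K) ^ (n - 2))\<bar> * K^2 \<le> c * K ^ n"
  shows "\<bar>Q - (\<delta> ^ (t - 1) * K ^ (t - 1) - (real t - 1) * (real t - 2) / 2 * \<delta> powi (int t - 3) * K powi (int t - 2))\<bar>
     \<le> (c + 2 * real (n choose 2)) * K powi (int t - 3)"
proof -
  define A where "A = (\<delta> * K) ^ n - real (n choose 2) * (K - 2) * (\<delta> * K) ^ (n - 2)"
  define M where "M = \<delta> ^ (t - 1) * K ^ (t - 1) - (real t - 1) * (real t - 2) / 2 * \<delta> powi (int t - 3) * K powi (int t - 2)"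
  have m: "\<bar>M - A\<bar> * K^2 \<le> 2 * real (n choose 2) * K ^ n" using Mclose[OF t K1 dk] unfolding M_def A_def .
  have "\<bar>Q - M\<bar> * K^2 \<le> (\<bar>Q - A\<bar> + \<bar>M - A\<bar>) * K^2"
    by (rule mult_right_mono) auto
  also have "\<dots> \<le> (c + 2 * real (n choose 2)) * K ^ n" using Q m unfolding A_def by (simp add: algebra_simps)
  finally have h: "\<bar>Q - M\<bar> * K^2 \<le> (c + 2 * real (n choose 2)) * K ^ n" .
  have K2: "K^2 > 0" using K1 by simp
  have "\<bar>Q - M\<bar> \<le> (c + 2 * real (n choose 2)) * K ^ n / K^2"
    using h K2 by (simp add: pos_le_divide_eq)
  then show ?thesis unfolding M_def t powi_K[OF K1] by simp
qed



declare binomial_Suc_Suc[simp del]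

lemma Q_bound:
  fixes a b K c s :: real
  assumes c: "\<And>a b K. 1 \<le> K \<Longrightarrow> \<bar>a\<bar> \<le> K \<Longrightarrow> \<bar>b\<bar> \<le> K \<Longrightarrow>
     \<bar>SS n a b - ((a - b) ^ n - real (n choose 2) * (a + b) * (a - b) ^ (n - 2))\<bar> * K^2 \<le> c * K ^ n"
    and K1: "1 \<le> K" and a: "\<bar>a\<bar> \<le> K" and b: "\<bar>b\<bar> \<le> K" and s: "s = (-1)^n"
  shows "\<bar>(SS n a b + s * SS n b a) / 2 - ((a - b) ^ n - real (n choose 2) * (a + b) * (a - b) ^ (n - 2))\<bar> * K^2 \<le> c * K ^ n"
proof -
  define M where "M = (a - b) ^ n - real (n choose 2) * (a + b) * (a - b) ^ (n - 2)"
  define M' where "M' = (b - a) ^ n - real (n choose 2) * (b + a) * (b - a) ^ (n - 2)"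
  have ss: "s * s = 1" unfolding s by (induct n) auto
  have sa: "\<bar>s\<bar> = 1" unfolding s by simp
  have M'M: "M' = s * M" unfolding M'_def M_def s by (rule Mswap)
  have MM: "s * M' = M" unfolding M'M mult.assoc[symmetric] ss by simp
  have h1: "\<bar>SS n a b - M\<bar> * K^2 \<le> c * K ^ n" using c[OF K1 a b] unfolding M_def .
  have h2: "\<bar>SS n b a - M'\<bar> * K^2 \<le> c * K ^ n" using c[OF K1 b a] unfolding M'_def .
  have h: "s * (SS n b a - M') = s * SS n b a - M" using MM by (simp only: right_diff_distrib)
  have e: "(SS n a b + s * SS n b a) / 2 - M = ((SS n a b - M) + s * (SS n b a - M')) / 2"
    unfolding h by (simp add: field_simps)
  have "\<bar>(SS n a b + s * SS n b a) / 2 - M\<bar> * K^2 \<le> ((\<bar>SS n a b - M\<bar> + \<bar>SS n b a - M'\<bar>) / 2) * K^2"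
    unfolding e
  proof (rule mult_right_mono)
    have "\<bar>(SS n a b - M) + s * (SS n b a - M')\<bar> \<le> \<bar>SS n a b - M\<bar> + \<bar>s * (SS n b a - M')\<bar>" by (rule abs_triangle_ineq)
    then show "\<bar>((SS n a b - M) + s * (SS n b a - M')) / 2\<bar> \<le> (\<bar>SS n a b - M\<bar> + \<bar>SS n b a - M'\<bar>) / 2"
      by (simp add: abs_mult sa)
  qed simp
  also have "\<dots> = (\<bar>SS n a b - M\<bar> * K^2 + \<bar>SS n b a - M'\<bar> * K^2) / 2" by (simp add: algebra_simps)
  also have "\<dots> \<le> c * K ^ n" using add_mono[OF h1 h2] by (simp add: field_simps)
  finally show ?thesis unfolding M_def .
qed

theorem lemma4p2:
  fixes \<delta>\<^sub>0 :: real
  assumes "\<delta>\<^sub>0 > 0"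
  shows "\<forall>t::nat. t \<ge> 1 \<longrightarrow> (\<exists>C::real. \<forall>(k::nat) (\<delta>::real) (u::nat) (v::nat).
    k \<ge> t + 1 \<and> \<delta>\<^sub>0 \<le> \<delta> \<and> \<delta> < 1 \<and> (\<exists>m::int. \<delta> * real k + real k - 1 = 2 * real_of_int m + 1)
    \<and> real u = (1 + \<delta>) / 2 * real k \<and> real v = (1 - \<delta>) / 2 * real k \<longrightarrow>
      fourier_coeff k (wmaj k \<delta>) {1}
        = 1 - (1 / 2 ^ (k - 2)) * (\<Sum>l = 0..<v. real (Binomial.binomial (k - 1) l))
    \<and> (odd t \<longrightarrow> (\<forall>I. I \<subseteq> {2..k} \<and> card I = t \<longrightarrow>
        (\<exists>R. \<bar>R\<bar> \<le> C * real k powi (int t - 3) \<and>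
          fourier_coeff k (wmaj k \<delta>) I
          = (1 / 2 ^ (k - 2)) * (fact (k - t - 1) / (fact (u - 1) * fact (v - 1)))
            * (\<delta> ^ (t - 1) * real k ^ (t - 1)
               - (real t - 1) * (real t - 2) / 2 * \<delta> powi (int t - 3) * real k powi (int t - 2) + R))))
    \<and> (even t \<longrightarrow> (\<forall>J. J \<subseteq> {2..k} \<and> card J = t \<longrightarrow>
        (\<exists>R. \<bar>R\<bar> \<le> C * real k powi (int t - 3) \<and>
          fourier_coeff k (wmaj k \<delta>) (insert 1 J)
          = - (1 / 2 ^ (k - 2)) * (fact (k - t - 1) / (fact (u - 1) * fact (v - 1)))
            * (\<delta> ^ (t - 1) * real k ^ (t - 1)
               - (real t - 1) * (real t - 2) / 2 * \<delta> powi (int t - 3) * real k powi (int t - 2) + R)))))"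
proof (intro allI impI)
  fix t :: nat assume t1: "t \<ge> 1"
  obtain n where tn: "t = Suc n" using t1 by (cases t) auto
  obtain c where c: "\<And>a b K. 1 \<le> K \<Longrightarrow> \<bar>a\<bar> \<le> K \<Longrightarrow> \<bar>b\<bar> \<le> K \<Longrightarrow>
     \<bar>SS n a b - ((a - b) ^ n - real (n choose 2) * (a + b) * (a - b) ^ (n - 2))\<bar> * K^2 \<le> c * K ^ n"
    using asym[of n] by blast
  show "\<exists>C::real. \<forall>(k::nat) (\<delta>::real) (u::nat) (v::nat).
    k \<ge> t + 1 \<and> \<delta>\<^sub>0 \<le> \<delta> \<and> \<delta> < 1 \<and> (\<exists>m::int. \<delta> * real k + real k - 1 = 2 * real_of_int m + 1)
    \<and> real u = (1 + \<delta>) / 2 * real k \<and> real v = (1 - \<delta>) / 2 * real k \<longrightarrow>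
      fourier_coeff k (wmaj k \<delta>) {1}
        = 1 - (1 / 2 ^ (k - 2)) * (\<Sum>l = 0..<v. real (Binomial.binomial (k - 1) l))
    \<and> (odd t \<longrightarrow> (\<forall>I. I \<subseteq> {2..k} \<and> card I = t \<longrightarrow>
        (\<exists>R. \<bar>R\<bar> \<le> C * real k powi (int t - 3) \<and>
          fourier_coeff k (wmaj k \<delta>) I
          = (1 / 2 ^ (k - 2)) * (fact (k - t - 1) / (fact (u - 1) * fact (v - 1)))
            * (\<delta> ^ (t - 1) * real k ^ (t - 1)
               - (real t - 1) * (real t - 2) / 2 * \<delta> powi (int t - 3) * real k powi (int t - 2) + R))))
    \<and> (even t \<longrightarrow> (\<forall>J. J \<subseteq> {2..k} \<and> card J = t \<longrightarrow>
        (\<exists>R. \<bar>R\<bar> \<le> C * real k powi (int t - 3) \<and>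
          fourier_coeff k (wmaj k \<delta>) (insert 1 J)
          = - (1 / 2 ^ (k - 2)) * (fact (k - t - 1) / (fact (u - 1) * fact (v - 1)))
            * (\<delta> ^ (t - 1) * real k ^ (t - 1)
               - (real t - 1) * (real t - 2) / 2 * \<delta> powi (int t - 3) * real k powi (int t - 2) + R))))"
  proof (intro exI[of _ "c + 2 * real (n choose 2)"] allI impI)
    fix k :: nat and \<delta> :: real and u v :: nat
    assume H: "k \<ge> t + 1 \<and> \<delta>\<^sub>0 \<le> \<delta> \<and> \<delta> < 1 \<and> (\<exists>m::int. \<delta> * real k + real k - 1 = 2 * real_of_int m + 1)
    \<and> real u = (1 + \<delta>) / 2 * real k \<and> real v = (1 - \<delta>) / 2 * real k"
    then have kt: "k \<ge> t + 1" and d0: "\<delta> > 0" and d1: "\<delta> < 1"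
      and hu: "real u = (1 + \<delta>) / 2 * real k" and hv: "real v = (1 - \<delta>) / 2 * real k"
      using assms by auto
    have k2: "k \<ge> 2" using kt t1 by simp
    have k1: "k \<ge> 1" using k2 by simp
    have K1: "real k \<ge> 1" using k1 by simp
    have uvr: "real u + real v = real k" using hu hv by (simp add: field_simps)
    have uv: "u + v = k" using uvr by (metis of_nat_add of_nat_eq_iff)
    have ud: "real u - real v = \<delta> * real k" using hu hv by (simp add: field_simps)
    have u1: "u \<ge> 1"
    proof -
      have "real u > 0" unfolding hu using d0 k1 by (intro mult_pos_pos) auto
      then show ?thesis by simp
    qed
    have v1: "v \<ge> 1"
    proof -
      have "real v > 0" unfolding hv using d1 k1 by (intro mult_pos_pos) auto
      then show ?thesis by simp
    qed
    have vu: "v \<le> u"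
    proof -
      have "real v \<le> real u" using ud d0 k1 by (simp add: algebra_simps)
      then show ?thesis by simp
    qed
    have wm: "wmaj k \<delta> = (\<lambda>x. sgn ((real u - real v) * x 1 + (\<Sum>i\<in>{2..k}. x i)))"
      unfolding wmaj_def ud by (simp add: mult.assoc)
    have p2: "(2::real) ^ k = 4 * 2 ^ (k - 2)"
    proof -
      have "k = (k - 2) + 2" using k2 by simp
      then have "(2::real) ^ k = 2 ^ (k - 2) * 2 ^ 2" by (metis power_add)
      then show ?thesis by simp
    qed
    define a where "a = real (u - 1)"
    define b where "b = real (v - 1)"
    define K where "K = real k"
    have ab: "a - b = \<delta> * K" unfolding a_def b_def K_def using u1 v1 ud by (simp add: of_nat_diff)
    have apb: "a + b = K - 2" unfolding a_def b_def K_def using u1 v1 uvr by (simp add: of_nat_diff)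
    have aK: "\<bar>a\<bar> \<le> K" unfolding a_def K_def using uv by simp
    have bK: "\<bar>b\<bar> \<le> K" unfolding b_def K_def using uv by simp
    have dK: "\<bar>\<delta>\<bar> \<le> 1" using d0 d1 by simp
    have kt1: "k - t - 1 = k - 1 - Suc n" using tn by simp
    define X :: real where "X = fact (k - 1 - Suc n) / (fact (u - 1) * fact (v - 1))"
    define Mst where "Mst = \<delta> ^ (t - 1) * real k ^ (t - 1)
               - (real t - 1) * (real t - 2) / 2 * \<delta> powi (int t - 3) * real k powi (int t - 2)"
    have Aeq: "(a - b) ^ n - real (n choose 2) * (a + b) * (a - b) ^ (n - 2)
        = (\<delta> * K) ^ n - real (n choose 2) * (K - 2) * (\<delta> * K) ^ (n - 2)" unfolding ab apb ..
    show "fourier_coeff k (wmaj k \<delta>) {1}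
        = 1 - (1 / 2 ^ (k - 2)) * (\<Sum>l = 0..<v. real (Binomial.binomial (k - 1) l))
    \<and> (odd t \<longrightarrow> (\<forall>I. I \<subseteq> {2..k} \<and> card I = t \<longrightarrow>
        (\<exists>R. \<bar>R\<bar> \<le> (c + 2 * real (n choose 2)) * real k powi (int t - 3) \<and>
          fourier_coeff k (wmaj k \<delta>) I
          = (1 / 2 ^ (k - 2)) * (fact (k - t - 1) / (fact (u - 1) * fact (v - 1)))
            * (\<delta> ^ (t - 1) * real k ^ (t - 1)
               - (real t - 1) * (real t - 2) / 2 * \<delta> powi (int t - 3) * real k powi (int t - 2) + R))))
    \<and> (even t \<longrightarrow> (\<forall>J. J \<subseteq> {2..k} \<and> card J = t \<longrightarrow>
        (\<exists>R. \<bar>R\<bar> \<le> (c + 2 * real (n choose 2)) * real k powi (int t - 3) \<and>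
          fourier_coeff k (wmaj k \<delta>) (insert 1 J)
          = - (1 / 2 ^ (k - 2)) * (fact (k - t - 1) / (fact (u - 1) * fact (v - 1)))
            * (\<delta> ^ (t - 1) * real k ^ (t - 1)
               - (real t - 1) * (real t - 2) / 2 * \<delta> powi (int t - 3) * real k powi (int t - 2) + R))))"
      unfolding kt1 X_def[symmetric] Mst_def[symmetric]
    proof (intro conjI impI allI)
      show "fourier_coeff k (wmaj k \<delta>) {1}
        = 1 - (1 / 2 ^ (k - 2)) * (\<Sum>l = 0..<v. real (Binomial.binomial (k - 1) l))"
      proof -
        have "(\<Sum>x\<in>cube k. wmaj k \<delta> x * (\<Prod>i\<in>{1}. x i)) = 2 ^ k - 4 * (\<Sum>l = 0..<v. real ((k - 1) choose l))"
          unfolding wm using num_1[OF k1 uv u1 v1 vu] by simp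
        then show ?thesis unfolding fourier_coeff_def p2 by (simp add: field_simps)
      qed
    next
      fix I assume ot: "odd t" and I: "I \<subseteq> {2..k} \<and> card I = t"
      have ne: "even n" using ot tn by simp
      have num: "(\<Sum>x\<in>cube k. wmaj k \<delta> x * (\<Prod>i\<in>I. x i)) = 2 * X * (SS n a b + SS n b a)"
      proof -
        have I1: "I \<subseteq> {2..k}" and I2: "card I = Suc n" using I tn by auto
        show ?thesis unfolding wm X_def a_def b_def using num_I[OF k1 I1 I2 uv u1 v1] ne by simp
      qed
      define Q where "Q = (SS n a b + (-1)^n * SS n b a) / 2"
      have Qb: "\<bar>Q - ((\<delta> * K) ^ n - real (n choose 2) * (K - 2) * (\<delta> * K) ^ (n - 2))\<bar> * K^2 \<le> c * K ^ n"
        using Q_bound[OF c _ aK bK refl] K1 unfolding Q_def Aeq K_def by simp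
      show "\<exists>R. \<bar>R\<bar> \<le> (c + 2 * real (n choose 2)) * real k powi (int t - 3) \<and>
          fourier_coeff k (wmaj k \<delta>) I = 1 / 2 ^ (k - 2) * X * (Mst + R)"
      proof (intro exI[of _ "Q - Mst"] conjI)
        show "\<bar>Q - Mst\<bar> \<le> (c + 2 * real (n choose 2)) * real k powi (int t - 3)"
          using R_bound[OF tn K1[folded K_def] dK Qb] unfolding Mst_def K_def .
        show "fourier_coeff k (wmaj k \<delta>) I = 1 / 2 ^ (k - 2) * X * (Mst + (Q - Mst))"
        proof -
          have s1: "(-1::real)^n = 1" using ne by simp
          show ?thesis unfolding fourier_coeff_def num Q_def s1 p2 by (simp add: field_simps)
        qed
      qed
    next
      fix J assume et: "even t" and J: "J \<subseteq> {2..k} \<and> card J = t"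
      have no: "odd n" using et tn by simp
      have num: "(\<Sum>x\<in>cube k. wmaj k \<delta> x * (\<Prod>i\<in>insert 1 J. x i)) = - 2 * X * (SS n a b - SS n b a)"
      proof -
        have I1: "J \<subseteq> {2..k}" and I2: "card J = Suc n" using J tn by auto
        show ?thesis unfolding wm X_def a_def b_def using num_J[OF k1 I1 I2 uv u1 v1] no by simp
      qed
      define Q where "Q = (SS n a b + (-1)^n * SS n b a) / 2"
      have Qb: "\<bar>Q - ((\<delta> * K) ^ n - real (n choose 2) * (K - 2) * (\<delta> * K) ^ (n - 2))\<bar> * K^2 \<le> c * K ^ n"
        using Q_bound[OF c _ aK bK refl] K1 unfolding Q_def Aeq K_def by simp
      show "\<exists>R. \<bar>R\<bar> \<le> (c + 2 * real (n choose 2)) * real k powi (int t - 3) \<and>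
          fourier_coeff k (wmaj k \<delta>) (insert 1 J) = - (1 / 2 ^ (k - 2)) * X * (Mst + R)"
      proof (intro exI[of _ "Q - Mst"] conjI)
        show "\<bar>Q - Mst\<bar> \<le> (c + 2 * real (n choose 2)) * real k powi (int t - 3)"
          using R_bound[OF tn K1[folded K_def] dK Qb] unfolding Mst_def K_def .
        show "fourier_coeff k (wmaj k \<delta>) (insert 1 J) = - (1 / 2 ^ (k - 2)) * X * (Mst + (Q - Mst))"
        proof -
          have s1: "(-1::real)^n = -1" using no by simp
          show ?thesis unfolding fourier_coeff_def num Q_def s1 p2 by (simp add: field_simps)
        qed
      qed
    qed
  qed
qed

end
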